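(* Let $A \in \mathbb{R}^{m\times n}$, $b \in \mathbb{R}^m$, $x_0 \in \mathbb{R}^n$, and run the F-AB-GMRES process described in the context with arbitrary vectors $z_1,z_2,\dots \in\mathbb{R}^n$. Assume that $\beta = \|r_0\|_2 \neq 0$ and that $k-1$ steps have been successfully performed, i.e. $h_{i+1,i}\neq 0$ for all $i<k$. Assume in addition that the matrix $H_k$ is nonsingular. Then $x_k$ is a solution of $Ax=b$ if and only if $h_{k+1,k}=0$.
   Context: Flexible AB-GMRES (F-AB-GMRES). Given $A \in \mathbb{R}^{m\times n}$, $b\in\mathbb{R}^m$ and an initial vector $x_0\in\mathbb{R}^n$, set $r_0 = b - A x_0$, $\beta = \|r_0\|_2$, $v_1 = r_0/\beta$. For $k = 1,2,\dots$: choose a vector $z_k \in \mathbb{R}^n$ (in the paper, $z_k = B^{(\ell_k)} v_k$ is the result of applying $\ell_k$ steps of a Kaczmarz-type iteration, possibly randomized or greedy, to $Az = v_k$, so the map $v_k \mapsto z_k$ may change with $k$; the results hold for arbitrary $z_k$); set $w_k = A z_k$; for $i = 1,\dots,k$ set $h_{i,k} = w_k^{\mathsf T} v_i$ and then $w_k \leftarrow w_k - h_{i,k} v_i$; set $h_{k+1,k} = \|w_k\|_2$ and, if $h_{k+1,k}\neq 0$, $v_{k+1} = w_k/h_{k+1,k}$. Let $Z_k = [z_1,\dots,z_k] \in \mathbb{R}^{n\times k}$, $V_k = [v_1,\dots,v_k]\in\mathbb{R}^{m\times k}$, let $\bar H_k = \{h_{i,j}\}_{1\le i\le k+1,\,1\le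 j\le k} \in \mathbb{R}^{(k+1)\times k}$ (upper Hessenberg, with $h_{i,j}=0$ for $i>j+1$), and let $H_k$ be the $k\times k$ matrix obtained from $\bar H_k$ by deleting its last row. The $k$th iterate is $x_k = x_0 + Z_k y_k$, where $y_k = \arg\min_{y\in\mathbb{R}^k}\|\beta e_1 - \bar H_k y\|_2$ and $e_1$ is the first column of the $(k+1)\times(k+1)$ identity matrix. *)

theory Defs
  imports "Jordan_Normal_Form.Matrix"
begin

definition vnorm :: "real vec \<Rightarrow> real" where
  "vnorm v = sqrt (v \<bullet> v)"

fun mgs :: "real vec \<Rightarrow> real vec list \<Rightarrow> real list \<times> real vec" where
  "mgs w [] = ([], w)"
| "mgs w (v # vs) =
     (let h = w \<bullet> v; (hs, w') = mgs (w - h \<cdot>\<^sub>v v) vs in (h # hs, w'))"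

definition fab_r0 :: "real mat \<Rightarrow> real vec \<Rightarrow> real vec \<Rightarrow> real vec" where
  "fab_r0 A b x0 = b - A *\<^sub>v x0"

definition fab_beta :: "real mat \<Rightarrow> real vec \<Rightarrow> real vec \<Rightarrow> real" where
  "fab_beta A b x0 = vnorm (fab_r0 A b x0)"

text \<open>fab_basis A b x0 z k = [v_1, ..., v_k] (for k steps of the process;
  the z_j are indexed from 1).  When h_{k+1,k} = 0 the vector v_{k+1} is not
  used by the statement (division by zero yields 0 in Isabelle).\<close>
fun fab_basis :: "real mat \<Rightarrow> real vec \<Rightarrow> real vec \<Rightarrow> (nat \<Rightarrow> real vec) \<Rightarrow> nat \<Rightarrow> real vec list" where
  "fab_basis A b x0 z 0 = []"
| "fab_basis A b x0 z (Suc k) =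
     (if k = 0 then [(1 / fab_beta A b x0) \<cdot>\<^sub>v fab_r0 A b x0]
      else (let B = fab_basis A b x0 z k;
                w = snd (mgs (A *\<^sub>v z k) B)
            in B @ [(1 / vnorm w) \<cdot>\<^sub>v w]))"

text \<open>Column j (j \<ge> 1) of the Hessenberg matrix: [h_{1,j}, ..., h_{j+1,j}].\<close>
definition fab_hcol :: "real mat \<Rightarrow> real vec \<Rightarrow> real vec \<Rightarrow> (nat \<Rightarrow> real vec) \<Rightarrow> nat \<Rightarrow> real list" where
  "fab_hcol A b x0 z j =
     (let r = mgs (A *\<^sub>v z j) (fab_basis A b x0 z j) in fst r @ [vnorm (snd r)])"

definition fab_h :: "real mat \<Rightarrow> real vec \<Rightarrow> real vec \<Rightarrow> (nat \<Rightarrow> real vec) \<Rightarrow> nat \<Rightarrow> nat \<Rightarrow> real" where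
  "fab_h A b x0 z i j =
     (if 1 \<le> j \<and> 1 \<le> i \<and> i \<le> j + 1 then fab_hcol A b x0 z j ! (i - 1) else 0)"

definition fab_Hbar :: "real mat \<Rightarrow> real vec \<Rightarrow> real vec \<Rightarrow> (nat \<Rightarrow> real vec) \<Rightarrow> nat \<Rightarrow> real mat" where
  "fab_Hbar A b x0 z k = mat (k + 1) k (\<lambda>(i, j). fab_h A b x0 z (i + 1) (j + 1))"

definition fab_H :: "real mat \<Rightarrow> real vec \<Rightarrow> real vec \<Rightarrow> (nat \<Rightarrow> real vec) \<Rightarrow> nat \<Rightarrow> real mat" where
  "fab_H A b x0 z k = mat k k (\<lambda>(i, j). fab_h A b x0 z (i + 1) (j + 1))"

definition fab_Z :: "nat \<Rightarrow> (nat \<Rightarrow> real vec) \<Rightarrow> nat \<Rightarrow> real mat" where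
  "fab_Z n z k = mat n k (\<lambda>(i, j). z (j + 1) $ i)"

definition fab_y :: "real mat \<Rightarrow> real vec \<Rightarrow> real vec \<Rightarrow> (nat \<Rightarrow> real vec) \<Rightarrow> nat \<Rightarrow> real vec" where
  "fab_y A b x0 z k =
     (SOME y. y \<in> carrier_vec k \<and>
        (\<forall>y' \<in> carrier_vec k.
           vnorm (fab_beta A b x0 \<cdot>\<^sub>v unit_vec (k + 1) 0 - fab_Hbar A b x0 z k *\<^sub>v y)
           \<le> vnorm (fab_beta A b x0 \<cdot>\<^sub>v unit_vec (k + 1) 0 - fab_Hbar A b x0 z k *\<^sub>v y')))"

definition fab_x :: "real mat \<Rightarrow> real vec \<Rightarrow> real vec \<Rightarrow> (nat \<Rightarrow> real vec) \<Rightarrow> nat \<Rightarrow> real vec" where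
  "fab_x A b x0 z k = x0 + fab_Z (dim_vec x0) z k *\<^sub>v fab_y A b x0 z k"

end

theory Submission
  imports Defs "Jordan_Normal_Form.Determinant"
begin



lemma sp_self_sum: "(v::real vec) \<bullet> v = (\<Sum>i<dim_vec v. (v$i)^2)"
  unfolding scalar_prod_def by (simp add: power2_eq_square lessThan_atLeast0)

lemma sp_self_nonneg: "(v::real vec) \<bullet> v \<ge> 0"
  unfolding sp_self_sum by (intro sum_nonneg) auto

lemma sp_self_zero: assumes "(v::real vec) \<in> carrier_vec N" "v \<bullet> v = 0" shows "v = 0\<^sub>v N"
proof -
  have "\<forall>i\<in>{..<dim_vec v}. (v$i)^2 = 0"
    using assms(2) unfolding sp_self_sum by (subst sum_nonneg_eq_0_iff[symmetric]) auto
  thus ?thesis using assms(1) by (intro eq_vecI) auto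
qed

lemma vnorm_zero: assumes "(v::real vec) \<in> carrier_vec N" "vnorm v = 0" shows "v = 0\<^sub>v N"
  using assms sp_self_zero unfolding vnorm_def by auto

lemma mgs_Cons: "mgs w (v # vs) = (w \<bullet> v # fst (mgs (w - (w \<bullet> v) \<cdot>\<^sub>v v) vs), snd (mgs (w - (w \<bullet> v) \<cdot>\<^sub>v v) vs))"
  by (cases "mgs (w - (w \<bullet> v) \<cdot>\<^sub>v v) vs") simp

declare mgs.simps(2)[simp del]

lemma mgs_len: "length (fst (mgs w vs)) = length vs"
  by (induction vs arbitrary: w) (auto simp: mgs_Cons)

lemma mgs_dim: "w \<in> carrier_vec N \<Longrightarrow> set vs \<subseteq> carrier_vec N \<Longrightarrow> snd (mgs w vs) \<in> carrier_vec N"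
  by (induction vs arbitrary: w) (auto simp: mgs_Cons)

lemma mgs_decomp:
  assumes "w \<in> carrier_vec N" "set vs \<subseteq> carrier_vec N" "p < N"
  shows "w $ p = snd (mgs w vs) $ p + (\<Sum>i<length vs. fst (mgs w vs) ! i * vs ! i $ p)"
  using assms
proof (induction vs arbitrary: w)
  case Nil thus ?case by simp
next
  case (Cons v vs)
  define h where "h = w \<bullet> v"
  define w1 where "w1 = w - h \<cdot>\<^sub>v v"
  have w1: "w1 \<in> carrier_vec N" using Cons.prems unfolding w1_def by auto
  have IH: "w1 $ p = snd (mgs w1 vs) $ p + (\<Sum>i<length vs. fst (mgs w1 vs) ! i * vs ! i $ p)"
    using Cons.IH[OF w1] Cons.prems by auto
  have e: "mgs w (v # vs) = (h # fst (mgs w1 vs), snd (mgs w1 vs))"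
    by (simp add: h_def w1_def mgs_Cons)
  have w1p: "w1 $ p = w $ p - h * v $ p" using Cons.prems w1 unfolding w1_def by auto
  have s: "(\<Sum>i<length (v # vs). fst (mgs w (v # vs)) ! i * (v # vs) ! i $ p)
     = h * v $ p + (\<Sum>i<length vs. fst (mgs w1 vs) ! i * vs ! i $ p)"
    unfolding e fst_conv length_Cons sum.lessThan_Suc_shift nth_Cons_0 nth_Cons_Suc by simp
  show ?case unfolding s unfolding e snd_conv using IH w1p by linarith
qed

lemma mgs_orth_pres:
  assumes "w \<in> carrier_vec N" "set vs \<subseteq> carrier_vec N" "u \<in> carrier_vec N"
    "\<forall>x\<in>set vs. x \<bullet> u = 0"
  shows "snd (mgs w vs) \<bullet> u = w \<bullet> u"
  using assms
proof (induction vs arbitrary: w)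
  case Nil thus ?case by simp
next
  case (Cons v vs)
  define h where "h = w \<bullet> v"
  define w1 where "w1 = w - h \<cdot>\<^sub>v v"
  have w1: "w1 \<in> carrier_vec N" using Cons.prems unfolding w1_def by auto
  have e: "snd (mgs w (v # vs)) = snd (mgs w1 vs)"
    by (simp add: h_def w1_def mgs_Cons)
  have "w1 \<bullet> u = w \<bullet> u - h * (v \<bullet> u)" unfolding w1_def
    using Cons.prems by (subst minus_scalar_prod_distrib[of _ N]) auto
  also have "\<dots> = w \<bullet> u" using Cons.prems by simp
  finally show ?case unfolding e using Cons.IH[OF w1] Cons.prems by auto
qed

definition orthonormal :: "real vec list \<Rightarrow> bool" where
  "orthonormal vs \<longleftrightarrow> (\<forall>i<length vs. \<forall>j<length vs. vs!i \<bullet> vs!j = (if i = j then 1 else 0))"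

lemma mgs_orth:
  assumes "w \<in> carrier_vec N" "set vs \<subseteq> carrier_vec N" "orthonormal vs" "i < length vs"
  shows "snd (mgs w vs) \<bullet> vs ! i = 0"
  using assms
proof (induction vs arbitrary: w i)
  case Nil thus ?case by simp
next
  case (Cons v vs)
  define h where "h = w \<bullet> v"
  define w1 where "w1 = w - h \<cdot>\<^sub>v v"
  have w1: "w1 \<in> carrier_vec N" using Cons.prems unfolding w1_def by auto
  have e: "snd (mgs w (v # vs)) = snd (mgs w1 vs)"
    by (simp add: h_def w1_def mgs_Cons)
  have on: "orthonormal vs" unfolding orthonormal_def
  proof (intro allI impI)
    fix i j assume "i < length vs" "j < length vs"
    hence "Suc i < length (v#vs)" "Suc j < length (v#vs)" by auto
    with Cons.prems(3) have "(v#vs)!Suc i \<bullet> (v#vs)!Suc j = (if Suc i = Suc j then 1 else 0)"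
      unfolding orthonormal_def by blast
    thus "vs ! i \<bullet> vs ! j = (if i = j then 1 else 0)" by simp
  qed
  show ?case
  proof (cases i)
    case 0
    have "0 < length (v#vs)" by simp
    with Cons.prems(3) have "(v#vs) ! 0 \<bullet> (v#vs) ! 0 = (if (0::nat) = 0 then 1 else 0)"
      unfolding orthonormal_def by blast
    hence vv: "v \<bullet> v = 1" by simp
    have perp: "\<forall>x\<in>set vs. x \<bullet> v = 0"
    proof
      fix x assume "x \<in> set vs"
      then obtain j where j: "j < length vs" "x = vs ! j" by (auto simp: in_set_conv_nth)
      have "Suc j < length (v#vs)" "0 < length (v#vs)" using j by auto
      with Cons.prems(3) have "(v#vs) ! Suc j \<bullet> (v#vs) ! 0 = (if Suc j = 0 then 1 else 0)"
        unfolding orthonormal_def by blast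
      thus "x \<bullet> v = 0" using j by simp
    qed
    have "snd (mgs w1 vs) \<bullet> v = w1 \<bullet> v"
      by (rule mgs_orth_pres[OF w1]) (use Cons.prems perp in auto)
    also have "\<dots> = w \<bullet> v - h * (v \<bullet> v)" unfolding w1_def
      using Cons.prems by (subst minus_scalar_prod_distrib[of _ N]) auto
    also have "\<dots> = 0" using vv h_def by simp
    finally show ?thesis using 0 e by simp
  next
    case (Suc i')
    thus ?thesis using e Cons.IH[OF w1 _ on] Cons.prems by auto
  qed
qed




definition vv where "vv A b x0 z i = fab_basis A b x0 z (Suc i) ! i"
definition wv where "wv A b x0 z j = snd (mgs (A *\<^sub>v z j) (fab_basis A b x0 z j))"

lemma fab_basis_snoc: "fab_basis A b x0 z (Suc j) = fab_basis A b x0 z j @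
   [if j = 0 then (1 / fab_beta A b x0) \<cdot>\<^sub>v fab_r0 A b x0 else (1 / vnorm (wv A b x0 z j)) \<cdot>\<^sub>v wv A b x0 z j]"
  by (cases j) (simp_all add: wv_def Let_def)

declare fab_basis.simps(2)[simp del]

lemma fab_basis_len: "length (fab_basis A b x0 z j) = j"
  by (induction j) (simp_all add: fab_basis_snoc)

lemma fab_basis_map: "fab_basis A b x0 z j = map (vv A b x0 z) [0..<j]"
proof (induction j)
  case 0 thus ?case by simp
next
  case (Suc j)
  have "fab_basis A b x0 z (Suc j) = fab_basis A b x0 z j @ [vv A b x0 z j]"
    unfolding vv_def using fab_basis_len[of A b x0 z j]
    by (simp add: fab_basis_snoc nth_append)
  thus ?case using Suc by (simp add: fab_basis_snoc)
qed

lemma vv_0: "vv A b x0 z 0 = (1 / fab_beta A b x0) \<cdot>\<^sub>v fab_r0 A b x0"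
  unfolding vv_def by (simp add: fab_basis.simps(2))

lemma vv_pos: "j \<ge> 1 \<Longrightarrow> vv A b x0 z j = (1 / vnorm (wv A b x0 z j)) \<cdot>\<^sub>v wv A b x0 z j"
  unfolding vv_def using fab_basis_len[of A b x0 z j]
  by (simp add: fab_basis_snoc nth_append)

lemma fab_basis_nth: "i < j \<Longrightarrow> fab_basis A b x0 z j ! i = vv A b x0 z i"
  by (simp add: fab_basis_map)

locale dims =
  fixes A :: "real mat" and b x0 :: "real vec" and z :: "nat \<Rightarrow> real vec" and m n :: nat
  assumes A: "A \<in> carrier_mat m n" and b: "b \<in> carrier_vec m" and x0: "x0 \<in> carrier_vec n"
    and z: "\<And>j. z j \<in> carrier_vec n"
begin

lemma r0_dim: "fab_r0 A b x0 \<in> carrier_vec m"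
  unfolding fab_r0_def using A b x0 by auto

lemma basis_dim: "set (fab_basis A b x0 z j) \<subseteq> carrier_vec m"
proof (induction j)
  case 0 thus ?case by simp
next
  case (Suc j)
  have "wv A b x0 z j \<in> carrier_vec m" unfolding wv_def
    by (rule mgs_dim[OF _ Suc]) (use A z in auto)
  thus ?case using Suc r0_dim by (simp add: fab_basis_snoc)
qed

lemma vv_dim: "vv A b x0 z i \<in> carrier_vec m"
  using basis_dim[of "Suc i"] fab_basis_len[of A b x0 z "Suc i"] unfolding vv_def
  by (metis lessI nth_mem subsetD)

lemma wv_dim: "wv A b x0 z j \<in> carrier_vec m"
  unfolding wv_def by (rule mgs_dim[OF _ basis_dim]) (use A z in auto)

lemma Az_dim: "A *\<^sub>v z j \<in> carrier_vec m" using A z by auto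

lemma h_col: assumes "1 \<le> j" "i \<le> j"
  shows "fab_h A b x0 z (i + 1) j = (if i < j then fst (mgs (A *\<^sub>v z j) (fab_basis A b x0 z j)) ! i
     else vnorm (wv A b x0 z j))"
  using assms mgs_len[of "A *\<^sub>v z j" "fab_basis A b x0 z j"] fab_basis_len[of A b x0 z j]
  unfolding fab_h_def fab_hcol_def wv_def by (auto simp: Let_def nth_append)

lemma h_zero: "i > j \<Longrightarrow> fab_h A b x0 z (i + 1) j = 0"
  unfolding fab_h_def by auto

lemma wv_eq: assumes "j \<ge> 1" "p < m"
  shows "wv A b x0 z j $ p = vnorm (wv A b x0 z j) * vv A b x0 z j $ p"
proof (cases "vnorm (wv A b x0 z j) = 0")
  case True
  thus ?thesis using vnorm_zero[OF wv_dim True] assms by simp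
next
  case False
  have "dim_vec (wv A b x0 z j) = m" using wv_dim by auto
  thus ?thesis using False assms vv_pos[OF \<open>j\<ge>1\<close>, of A b x0 z] by simp
qed

lemma Az_decomp: assumes "1 \<le> j" "p < m"
  shows "(A *\<^sub>v z j) $ p = (\<Sum>i<j+1. fab_h A b x0 z (i + 1) j * vv A b x0 z i $ p)"
proof -
  have "(A *\<^sub>v z j) $ p = wv A b x0 z j $ p +
     (\<Sum>i<j. fst (mgs (A *\<^sub>v z j) (fab_basis A b x0 z j)) ! i * fab_basis A b x0 z j ! i $ p)"
    using mgs_decomp[OF Az_dim basis_dim assms(2), of j j] fab_basis_len[of A b x0 z j]
    unfolding wv_def by simp
  also have "\<dots> = (\<Sum>i<j. fab_h A b x0 z (i + 1) j * vv A b x0 z i $ p) +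
       fab_h A b x0 z (j + 1) j * vv A b x0 z j $ p"
    using wv_eq[OF assms(1) assms(2)] h_col[OF assms(1)] by (simp add: fab_basis_nth)
  finally show ?thesis by simp
qed

lemma Az_decomp_ext: assumes "1 \<le> j" "j \<le> K" "p < m"
  shows "(A *\<^sub>v z j) $ p = (\<Sum>i<K+1. fab_h A b x0 z (i + 1) j * vv A b x0 z i $ p)"
  unfolding Az_decomp[OF assms(1,3)]
  by (rule sum.mono_neutral_left) (use assms h_zero in auto)

end

lemma orthonormal_snoc:
  assumes "orthonormal xs" "x \<bullet> x = 1" "\<And>l. l < length xs \<Longrightarrow> x \<bullet> xs ! l = 0"
    "\<And>l. l < length xs \<Longrightarrow> xs ! l \<bullet> x = 0"
  shows "orthonormal (xs @ [x])"
  unfolding orthonormal_def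
proof (intro allI impI)
  fix i j assume i: "i < length (xs @ [x])" and j: "j < length (xs @ [x])"
  show "(xs @ [x]) ! i \<bullet> (xs @ [x]) ! j = (if i = j then 1 else 0)"
  proof (cases "i < length xs")
    case ti: True
    show ?thesis
    proof (cases "j < length xs")
      case tj: True
      have "xs ! i \<bullet> xs ! j = (if i = j then 1 else 0)"
        using assms(1) ti tj unfolding orthonormal_def by blast
      thus ?thesis using ti tj by (simp add: nth_append)
    next
      case fj: False
      hence "j = length xs" using j by simp
      thus ?thesis using ti assms(4)[OF ti] by (simp add: nth_append)
    qed
  next
    case fi: False
    hence ii: "i = length xs" using i by simp
    show ?thesis
    proof (cases "j < length xs")
      case tj: True
      thus ?thesis using ii assms(3)[OF tj] by (simp add: nth_append)
    next
      case fj: False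
      hence "j = length xs" using j by simp
      thus ?thesis using ii assms(2) by (simp add: nth_append)
    qed
  qed
qed

context dims begin

lemma basis_orth:
  assumes "fab_beta A b x0 \<noteq> 0" "K \<ge> 1" "\<And>i. 1 \<le> i \<Longrightarrow> i < K \<Longrightarrow> fab_h A b x0 z (i + 1) i \<noteq> 0"
  shows "orthonormal (fab_basis A b x0 z K)"
  using assms(2,3)
proof (induction K rule: dec_induct)
  case base
  have "vv A b x0 z 0 \<bullet> vv A b x0 z 0 = (1 / fab_beta A b x0)^2 * (fab_r0 A b x0 \<bullet> fab_r0 A b x0)"
    unfolding vv_0 using r0_dim by (simp add: power2_eq_square)
  also have "fab_r0 A b x0 \<bullet> fab_r0 A b x0 = (fab_beta A b x0)^2"
    unfolding fab_beta_def vnorm_def using sp_self_nonneg by simp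
  finally have "vv A b x0 z 0 \<bullet> vv A b x0 z 0 = (1 / fab_beta A b x0)^2 * (fab_beta A b x0)^2" .
  also have "\<dots> = 1" using assms(1) by (simp add: power_divide)
  finally have "vv A b x0 z 0 \<bullet> vv A b x0 z 0 = 1" .
  moreover have "fab_basis A b x0 z 1 = [vv A b x0 z 0]" using fab_basis_map[of A b x0 z 1] by simp
  ultimately show ?case unfolding orthonormal_def by simp
next
  case (step K)
  have on: "orthonormal (fab_basis A b x0 z K)" using step by auto
  have nz: "vnorm (wv A b x0 z K) \<noteq> 0" using step.prems[of K] step.hyps h_col[of K K] by auto
  have sq: "wv A b x0 z K \<bullet> wv A b x0 z K = (vnorm (wv A b x0 z K))^2"
    unfolding vnorm_def using sp_self_nonneg by simp
  have vK: "vv A b x0 z K = (1 / vnorm (wv A b x0 z K)) \<cdot>\<^sub>v wv A b x0 z K"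
    using vv_pos step.hyps by auto
  have e: "fab_basis A b x0 z (Suc K) = fab_basis A b x0 z K @ [vv A b x0 z K]"
    using fab_basis_map by simp
  have orth: "wv A b x0 z K \<bullet> fab_basis A b x0 z K ! l = 0" if "l < K" for l
    unfolding wv_def by (rule mgs_orth[OF Az_dim basis_dim on]) (use that fab_basis_len in auto)
  show ?case unfolding e
  proof (rule orthonormal_snoc[OF on])
    show "vv A b x0 z K \<bullet> vv A b x0 z K = 1" unfolding vK using wv_dim nz
      by (simp add: sq power2_eq_square)
    fix l assume l: "l < length (fab_basis A b x0 z K)"
    hence l': "l < K" by (simp add: fab_basis_len)
    have d: "fab_basis A b x0 z K ! l \<in> carrier_vec m" using basis_dim[of K] l by (meson nth_mem subsetD)
    show *: "vv A b x0 z K \<bullet> fab_basis A b x0 z K ! l = 0" unfolding vK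
      using orth[OF l'] wv_dim d by simp
    show "fab_basis A b x0 z K ! l \<bullet> vv A b x0 z K = 0"
      using * comm_scalar_prod[OF d vv_dim] by simp
  qed
qed

end



lemma Hbar_mult: assumes "y \<in> carrier_vec k" "i < k + 1"
  shows "(fab_Hbar A b x0 z k *\<^sub>v y) $ i = (\<Sum>j<k. fab_h A b x0 z (i + 1) (j + 1) * y $ j)"
  using assms unfolding fab_Hbar_def
  by (simp add: scalar_prod_def lessThan_atLeast0)

lemma H_mult: assumes "y \<in> carrier_vec k" "i < k"
  shows "(fab_H A b x0 z k *\<^sub>v y) $ i = (\<Sum>j<k. fab_h A b x0 z (i + 1) (j + 1) * y $ j)"
  using assms unfolding fab_H_def
  by (simp add: scalar_prod_def lessThan_atLeast0)

context dims begin

lemma AZy: assumes "y \<in> carrier_vec k" "p < m"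
  shows "(A *\<^sub>v (fab_Z n z k *\<^sub>v y)) $ p = (\<Sum>j<k. y $ j * (A *\<^sub>v z (j + 1)) $ p)"
proof -
  have zd: "\<And>j. dim_vec (z j) = n" using z by auto
  have "(A *\<^sub>v (fab_Z n z k *\<^sub>v y)) $ p = (\<Sum>q<n. A $$ (p, q) * (\<Sum>j<k. z (j + 1) $ q * y $ j))"
    using A assms unfolding fab_Z_def
    by (simp add: scalar_prod_def lessThan_atLeast0)
  also have "\<dots> = (\<Sum>j<k. y $ j * (\<Sum>q<n. A $$ (p, q) * z (j + 1) $ q))"
    by (simp add: sum_distrib_left sum.swap[of _ "{..<k}"] mult_ac)
  also have "\<dots> = (\<Sum>j<k. y $ j * (A *\<^sub>v z (j + 1)) $ p)"
    using A assms zd by (simp add: scalar_prod_def lessThan_atLeast0)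
  finally show ?thesis .
qed

lemma resid: assumes beta: "fab_beta A b x0 \<noteq> 0" and y: "y \<in> carrier_vec k" and p: "p < m"
  shows "(b - A *\<^sub>v (x0 + fab_Z n z k *\<^sub>v y)) $ p =
    (\<Sum>i<k+1. (fab_beta A b x0 \<cdot>\<^sub>v unit_vec (k + 1) 0 - fab_Hbar A b x0 z k *\<^sub>v y) $ i * vv A b x0 z i $ p)"
proof -
  let ?\<beta> = "fab_beta A b x0"
  let ?Hb = "fab_Hbar A b x0 z k"
  have Zd: "fab_Z n z k \<in> carrier_mat n k" unfolding fab_Z_def by simp
  have Zy: "fab_Z n z k *\<^sub>v y \<in> carrier_vec n" using Zd unfolding carrier_vec_def by simp
  have "A *\<^sub>v (x0 + fab_Z n z k *\<^sub>v y) = A *\<^sub>v x0 + A *\<^sub>v (fab_Z n z k *\<^sub>v y)"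
    using mult_add_distrib_mat_vec[OF A x0 Zy] .
  hence "(b - A *\<^sub>v (x0 + fab_Z n z k *\<^sub>v y)) $ p = fab_r0 A b x0 $ p - (A *\<^sub>v (fab_Z n z k *\<^sub>v y)) $ p"
    using A b x0 Zy p unfolding fab_r0_def by simp
  also have "fab_r0 A b x0 $ p = ?\<beta> * vv A b x0 z 0 $ p"
    using beta r0_dim p unfolding vv_0 by simp
  also have "(A *\<^sub>v (fab_Z n z k *\<^sub>v y)) $ p =
      (\<Sum>j<k. y $ j * (\<Sum>i<k+1. fab_h A b x0 z (i + 1) (j + 1) * vv A b x0 z i $ p))"
    unfolding AZy[OF y p] by (intro sum.cong refl) (subst Az_decomp_ext[of _ k], use p in auto)
  also have "\<dots> = (\<Sum>i<k+1. (\<Sum>j<k. fab_h A b x0 z (i + 1) (j + 1) * y $ j) * vv A b x0 z i $ p)"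
    unfolding sum_distrib_left sum_distrib_right
    by (subst sum.swap) (rule sum.cong[OF refl], rule sum.cong[OF refl], simp)
  also have "\<dots> = (\<Sum>i<k+1. (?Hb *\<^sub>v y) $ i * vv A b x0 z i $ p)"
    by (intro sum.cong refl) (simp add: Hbar_mult[OF y])
  finally have 1: "(b - A *\<^sub>v (x0 + fab_Z n z k *\<^sub>v y)) $ p =
     ?\<beta> * vv A b x0 z 0 $ p - (\<Sum>i<k+1. (?Hb *\<^sub>v y) $ i * vv A b x0 z i $ p)" .
  have Hbd: "?Hb *\<^sub>v y \<in> carrier_vec (k+1)" unfolding fab_Hbar_def carrier_vec_def by simp
  hence Hbd': "dim_vec (?Hb *\<^sub>v y) = k+1" unfolding carrier_vec_def by simp
  have "(\<Sum>i<k+1. (?\<beta> \<cdot>\<^sub>v unit_vec (k + 1) 0 - ?Hb *\<^sub>v y) $ i * vv A b x0 z i $ p)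
     = (\<Sum>i<k+1. (?\<beta> * (if i = 0 then 1 else 0)) * vv A b x0 z i $ p) - (\<Sum>i<k+1. (?Hb *\<^sub>v y) $ i * vv A b x0 z i $ p)"
    unfolding sum_subtractf[symmetric] using Hbd'
    by (intro sum.cong refl) (simp add: algebra_simps)
  also have "(\<Sum>i<k+1. (?\<beta> * (if i = 0 then 1 else 0)) * vv A b x0 z i $ p) = ?\<beta> * vv A b x0 z 0 $ p"
    by (simp only: Suc_eq_plus1[symmetric] sum.lessThan_Suc_shift) simp
  finally show ?thesis using 1 by simp
qed

lemma coeff_zero:
  assumes on: "orthonormal (fab_basis A b x0 z K)" and s: "\<And>p. p < m \<Longrightarrow> (\<Sum>i<K. d i * vv A b x0 z i $ p) = 0"
    and l: "l < K"
  shows "d l = 0"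
proof -
  have vd: "\<And>i. dim_vec (vv A b x0 z i) = m" using vv_dim by auto
  have o: "\<And>i. i < K \<Longrightarrow> vv A b x0 z i \<bullet> vv A b x0 z l = (if i = l then 1 else 0)"
    using on l unfolding orthonormal_def fab_basis_len by (simp add: fab_basis_nth)
  have "0 = (\<Sum>p<m. (\<Sum>i<K. d i * vv A b x0 z i $ p) * vv A b x0 z l $ p)"
    using s by simp
  also have "\<dots> = (\<Sum>i<K. d i * (vv A b x0 z i \<bullet> vv A b x0 z l))"
    using vd by (simp add: scalar_prod_def lessThan_atLeast0 sum_distrib_left sum_distrib_right
        mult_ac) (rule sum.swap)
  also have "\<dots> = (\<Sum>i<K. d i * (if i = l then 1 else 0))"
    by (intro sum.cong refl) (simp add: o)
  also have "\<dots> = d l" using l by (simp add: if_distrib cong: if_cong)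
  finally show ?thesis by simp
qed

lemma backsub:
  assumes hnz: "\<And>i. 1 \<le> i \<Longrightarrow> i \<le> k \<Longrightarrow> fab_h A b x0 z (i + 1) i \<noteq> 0"
    and y: "y \<in> carrier_vec k"
    and rows: "\<And>i. 1 \<le> i \<Longrightarrow> i \<le> k \<Longrightarrow> (fab_Hbar A b x0 z k *\<^sub>v y) $ i = 0"
  shows "y = 0\<^sub>v k"
proof -
  have "\<forall>j. k - d \<le> j \<longrightarrow> j < k \<longrightarrow> y $ j = 0" for d
  proof (induction d)
    case 0 thus ?case by auto
  next
    case (Suc d)
    show ?case
    proof (intro allI impI)
      fix j assume j1: "k - Suc d \<le> j" and j2: "j < k"
      show "y $ j = 0"
      proof (cases "k - d \<le> j")
        case True thus ?thesis using Suc j2 by auto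
      next
        case False
        have big: "\<And>j'. j < j' \<Longrightarrow> j' < k \<Longrightarrow> y $ j' = 0" using Suc False j1 by auto
        have "0 = (fab_Hbar A b x0 z k *\<^sub>v y) $ (j + 1)" using rows[of "j+1"] j2 by simp
        also have "\<dots> = (\<Sum>j'<k. fab_h A b x0 z (j + 1 + 1) (j' + 1) * y $ j')"
          using Hbar_mult[OF y, of "j+1"] j2 by simp
        also have "\<dots> = fab_h A b x0 z (j + 1 + 1) (j + 1) * y $ j +
             (\<Sum>j'\<in>{..<k} - {j}. fab_h A b x0 z (j + 1 + 1) (j' + 1) * y $ j')"
          using j2 by (subst sum.remove[of _ j]) auto
        also have "(\<Sum>j'\<in>{..<k} - {j}. fab_h A b x0 z (j + 1 + 1) (j' + 1) * y $ j') = 0"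
        proof (intro sum.neutral ballI)
          fix j' assume "j' \<in> {..<k} - {j}"
          hence "j' < j \<or> (j < j' \<and> j' < k)" by auto
          thus "fab_h A b x0 z (j + 1 + 1) (j' + 1) * y $ j' = 0"
            using big h_zero[of "j' + 1" "j + 1"] by auto
        qed
        finally have "fab_h A b x0 z (j + 1 + 1) (j + 1) * y $ j = 0" by simp
        moreover have "fab_h A b x0 z (j + 1 + 1) (j + 1) \<noteq> 0" using hnz[of "j+1"] j2 by simp
        ultimately show ?thesis by simp
      qed
    qed
  qed
  from this[of k] show ?thesis using y by (intro eq_vecI) auto
qed

end



lemma ls_exists:
  fixes G :: "real mat"
  assumes G: "G \<in> carrier_mat N K" and c: "c \<in> carrier_vec N"
    and inj: "\<And>y. y \<in> carrier_vec K \<Longrightarrow> G *\<^sub>v y = 0\<^sub>v N \<Longrightarrow> y = 0\<^sub>v K"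
  shows "\<exists>y. y \<in> carrier_vec K \<and> (\<forall>y' \<in> carrier_vec K. vnorm (c - G *\<^sub>v y) \<le> vnorm (c - G *\<^sub>v y'))"
proof -
  define M where "M = transpose_mat G * G"
  have M: "M \<in> carrier_mat K K" unfolding M_def using G by auto
  have GT: "transpose_mat G \<in> carrier_mat K N" using G by auto
  have "det M \<noteq> 0"
  proof
    assume "det M = 0"
    then obtain v where v: "v \<in> carrier_vec K" "v \<noteq> 0\<^sub>v K" "M *\<^sub>v v = 0\<^sub>v K"
      using det_0_iff_vec_prod_zero_field[OF M] by auto
    have Gv: "G *\<^sub>v v \<in> carrier_vec N" using G v by auto
    have "transpose_mat G *\<^sub>v (G *\<^sub>v v) = 0\<^sub>v K" using v G unfolding M_def by simp
    hence "(transpose_mat G *\<^sub>v (G *\<^sub>v v)) \<bullet> v = 0" using v by simp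
    hence "(G *\<^sub>v v) \<bullet> (G *\<^sub>v v) = 0" using transpose_vec_mult_scalar[OF G v(1) Gv] by simp
    hence "G *\<^sub>v v = 0\<^sub>v N" using sp_self_zero[OF Gv] by simp
    thus False using inj v by auto
  qed
  from det_non_zero_imp_unit[OF M this, of "()"]
  obtain B where B: "B \<in> carrier_mat K K" "M * B = 1\<^sub>m K"
    unfolding Units_def ring_mat_def by auto
  define g where "g = transpose_mat G *\<^sub>v c"
  have g: "g \<in> carrier_vec K" unfolding g_def using GT c by auto
  define ys where "ys = B *\<^sub>v g"
  have ys: "ys \<in> carrier_vec K" unfolding ys_def using B g by auto
  have "M *\<^sub>v ys = g" unfolding ys_def using B g M
    by (metis assoc_mult_mat_vec one_mult_mat_vec)
  hence normal: "transpose_mat G *\<^sub>v (G *\<^sub>v ys) = g" unfolding M_def using G ys by simp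
  define r where "r = c - G *\<^sub>v ys"
  have Gys: "G *\<^sub>v ys \<in> carrier_vec N" using G ys by auto
  have r: "r \<in> carrier_vec N" unfolding r_def using c Gys by auto
  have Tr: "transpose_mat G *\<^sub>v r = 0\<^sub>v K"
    unfolding r_def using mult_minus_distrib_mat_vec[OF GT c Gys] normal
      minus_cancel_vec[OF g[unfolded g_def]] unfolding g_def by simp
  show ?thesis
  proof (intro exI conjI ballI)
    show "ys \<in> carrier_vec K" by fact
    fix y' :: "real vec" assume y': "y' \<in> carrier_vec K"
    define d where "d = ys - y'"
    have d: "d \<in> carrier_vec K" unfolding d_def using ys y' by auto
    have Gd: "G *\<^sub>v d \<in> carrier_vec N" using G d by auto
    have Gy': "G *\<^sub>v y' \<in> carrier_vec N" using G y' by auto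
    have eq: "c - G *\<^sub>v y' = r + G *\<^sub>v d"
      unfolding r_def d_def using mult_minus_distrib_mat_vec[OF G ys y'] c Gys Gy'
      by (intro eq_vecI) auto
    have rGd: "r \<bullet> (G *\<^sub>v d) = 0"
      using transpose_vec_mult_scalar[OF G d r] Tr d by simp
    have "(r + G *\<^sub>v d) \<bullet> (r + G *\<^sub>v d) = r \<bullet> r + r \<bullet> (G *\<^sub>v d) + ((G *\<^sub>v d) \<bullet> r + (G *\<^sub>v d) \<bullet> (G *\<^sub>v d))"
      using r Gd by (simp add: add_scalar_prod_distrib[of _ N] scalar_prod_add_distrib[of _ N])
    also have "(G *\<^sub>v d) \<bullet> r = r \<bullet> (G *\<^sub>v d)" using comm_scalar_prod[OF Gd r] .
    finally have "(r + G *\<^sub>v d) \<bullet> (r + G *\<^sub>v d) = r \<bullet> r + (G *\<^sub>v d) \<bullet> (G *\<^sub>v d)" using rGd by simp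
    hence "r \<bullet> r \<le> (c - G *\<^sub>v y') \<bullet> (c - G *\<^sub>v y')" unfolding eq using sp_self_nonneg[of "G *\<^sub>v d"] by simp
    thus "vnorm (c - G *\<^sub>v ys) \<le> vnorm (c - G *\<^sub>v y')" unfolding vnorm_def r_def[symmetric] by simp
  qed
qed




theorem theorem3p2:
  fixes A :: "real mat" and b x0 :: "real vec" and z :: "nat \<Rightarrow> real vec"
    and m n k :: nat
  assumes "A \<in> carrier_mat m n"
    and "b \<in> carrier_vec m"
    and "x0 \<in> carrier_vec n"
    and "\<And>j. z j \<in> carrier_vec n"
    and "fab_beta A b x0 \<noteq> 0"
    and "k \<ge> 1"
    and "\<And>i. 1 \<le> i \<Longrightarrow> i < k \<Longrightarrow> fab_h A b x0 z (i + 1) i \<noteq> 0"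
    and "invertible_mat (fab_H A b x0 z k)"
  shows "A *\<^sub>v fab_x A b x0 z k = b \<longleftrightarrow> fab_h A b x0 z (k + 1) k = 0"
proof -
  interpret dims A b x0 z m n using assms(1-4) by unfold_locales auto
  note beta = assms(5) and k1 = assms(6) and hyp = assms(7) and inv = assms(8)
  define \<beta> where "\<beta> = fab_beta A b x0"
  define c where "c = \<beta> \<cdot>\<^sub>v unit_vec (k + 1) 0"
  define Hb where "Hb = fab_Hbar A b x0 z k"
  define Z where "Z = fab_Z n z k"
  have Hbd: "Hb \<in> carrier_mat (k+1) k" unfolding Hb_def fab_Hbar_def by simp
  have cd: "c \<in> carrier_vec (k+1)" unfolding c_def by simp
  have c0: "c $ 0 = \<beta>" unfolding c_def by simp
  have ci: "\<And>i. 0 < i \<Longrightarrow> i < k + 1 \<Longrightarrow> c $ i = 0" unfolding c_def by simp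
  define P where "P y \<longleftrightarrow> y \<in> carrier_vec k \<and> (\<forall>y'\<in>carrier_vec k. vnorm (c - Hb *\<^sub>v y) \<le> vnorm (c - Hb *\<^sub>v y'))" for y
  define yk where "yk = fab_y A b x0 z k"
  have yk_def': "yk = (SOME y. P y)" unfolding yk_def fab_y_def P_def c_def \<beta>_def Hb_def by simp
  have x_eq: "fab_x A b x0 z k = x0 + Z *\<^sub>v yk"
    unfolding fab_x_def Z_def yk_def using x0 by simp
  have Zd: "Z \<in> carrier_mat n k" unfolding Z_def fab_Z_def by simp
  have key: "A *\<^sub>v (x0 + Z *\<^sub>v y) = b \<longleftrightarrow>
      (\<forall>p<m. (\<Sum>i<k+1. (c - Hb *\<^sub>v y) $ i * vv A b x0 z i $ p) = 0)" if y: "y \<in> carrier_vec k" for y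
  proof -
    have Zy: "Z *\<^sub>v y \<in> carrier_vec n" using Zd y by (rule mult_mat_vec_carrier)
    have AX: "A *\<^sub>v (x0 + Z *\<^sub>v y) \<in> carrier_vec m"
      by (rule mult_mat_vec_carrier[OF A add_carrier_vec[OF x0 Zy]])
    have AXd: "dim_vec (A *\<^sub>v (x0 + Z *\<^sub>v y)) = m" using AX by (rule carrier_vecD)
    have r: "\<And>p. p < m \<Longrightarrow> (b - A *\<^sub>v (x0 + Z *\<^sub>v y)) $ p = (\<Sum>i<k+1. (c - Hb *\<^sub>v y) $ i * vv A b x0 z i $ p)"
      using resid[OF beta y, folded \<beta>_def, folded c_def Hb_def Z_def] .
    have "A *\<^sub>v (x0 + Z *\<^sub>v y) = b \<longleftrightarrow> (\<forall>p<m. (b - A *\<^sub>v (x0 + Z *\<^sub>v y)) $ p = 0)"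
    proof
      assume "A *\<^sub>v (x0 + Z *\<^sub>v y) = b"
      thus "\<forall>p<m. (b - A *\<^sub>v (x0 + Z *\<^sub>v y)) $ p = 0" using b by (simp add: minus_cancel_vec)
    next
      assume h: "\<forall>p<m. (b - A *\<^sub>v (x0 + Z *\<^sub>v y)) $ p = 0"
      show "A *\<^sub>v (x0 + Z *\<^sub>v y) = b"
      proof (rule eq_vecI)
        fix p assume "p < dim_vec b"
        hence p: "p < m" using b by simp
        have "(b - A *\<^sub>v (x0 + Z *\<^sub>v y)) $ p = b $ p - (A *\<^sub>v (x0 + Z *\<^sub>v y)) $ p"
          using AXd p by simp
        thus "(A *\<^sub>v (x0 + Z *\<^sub>v y)) $ p = b $ p" using h p by simp
      qed (use AXd carrier_vecD[OF b] in simp)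
    qed
    thus ?thesis using r by simp
  qed
  have yk_dim_if: "P yk" if "\<exists>y. P y" using that unfolding yk_def' by (rule someI_ex)
  show ?thesis
  proof (cases "fab_h A b x0 z (k + 1) k = 0")
    case True
    let ?H = "fab_H A b x0 z k"
    have Hd: "?H \<in> carrier_mat k k" unfolding fab_H_def by simp
    obtain B where HB: "?H * B = 1\<^sub>m k" and BH: "B * ?H = 1\<^sub>m (dim_row B)"
      using inv Hd unfolding invertible_mat_def inverts_mat_def by auto
    have "dim_col B = k" using HB by (metis index_mult_mat(3) index_one_mat(3))
    moreover have "dim_row B = k" using BH Hd by (metis carrier_matD(2) index_mult_mat(3) index_one_mat(3))
    ultimately have Bd: "B \<in> carrier_mat k k" by auto
    define c' where "c' = \<beta> \<cdot>\<^sub>v unit_vec k 0"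
    have c'd: "c' \<in> carrier_vec k" unfolding c'_def by simp
    define y0 where "y0 = B *\<^sub>v c'"
    have y0: "y0 \<in> carrier_vec k" unfolding y0_def using Bd c'd by auto
    have Hy0: "?H *\<^sub>v y0 = c'" unfolding y0_def
      using assoc_mult_mat_vec[OF Hd Bd c'd, symmetric] HB c'd by simp
    have "Hb *\<^sub>v y0 = c"
    proof (rule eq_vecI)
      show "dim_vec (Hb *\<^sub>v y0) = dim_vec c" using Hbd cd by simp
      fix i assume "i < dim_vec c"
      hence i: "i < k + 1" using cd by simp
      show "(Hb *\<^sub>v y0) $ i = c $ i"
      proof (cases "i < k")
        case True
        have "(Hb *\<^sub>v y0) $ i = (?H *\<^sub>v y0) $ i"
          unfolding Hb_def using Hbar_mult[OF y0 i] H_mult[OF y0 True] by simp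
        also have "\<dots> = c $ i" unfolding Hy0 c'_def c_def using True by simp
        finally show ?thesis .
      next
        case False
        hence ik: "i = k" using i by simp
        have "(Hb *\<^sub>v y0) $ i = (\<Sum>j<k. fab_h A b x0 z (k + 1) (j + 1) * y0 $ j)"
          unfolding Hb_def using Hbar_mult[OF y0 i] ik by simp
        also have "\<dots> = 0"
        proof (intro sum.neutral ballI)
          fix j assume "j \<in> {..<k}"
          hence "j + 1 < k \<or> j + 1 = k" by auto
          thus "fab_h A b x0 z (k + 1) (j + 1) * y0 $ j = 0"
            using True h_zero[of "j+1" k] by auto
        qed
        finally show ?thesis using ci[of i] ik k1 by simp
      qed
    qed
    hence "vnorm (c - Hb *\<^sub>v y0) = 0" using cd unfolding vnorm_def by simp
    hence "P y0" unfolding P_def vnorm_def using y0 sp_self_nonneg by simp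
    hence Pk: "P yk" using yk_dim_if by blast
    have ykd: "yk \<in> carrier_vec k" using Pk P_def by simp
    have "vnorm (c - Hb *\<^sub>v yk) \<le> vnorm (c - Hb *\<^sub>v y0)" using Pk y0 unfolding P_def by blast
    hence "vnorm (c - Hb *\<^sub>v yk) = 0" using \<open>vnorm (c - Hb *\<^sub>v y0) = 0\<close>
      unfolding vnorm_def using sp_self_nonneg[of "c - Hb *\<^sub>v yk"] by simp
    hence z0: "c - Hb *\<^sub>v yk = 0\<^sub>v (k+1)" by (rule vnorm_zero[rotated]) (use cd ykd Hbd in simp)
    have "A *\<^sub>v fab_x A b x0 z k = b" unfolding x_eq key[OF ykd] z0 by simp
    thus ?thesis using True by simp
  next
    case False
    have hnz: "\<And>i. 1 \<le> i \<Longrightarrow> i \<le> k \<Longrightarrow> fab_h A b x0 z (i + 1) i \<noteq> 0"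
      using hyp False by (metis le_neq_implies_less)
    have "\<exists>y. P y" unfolding P_def
    proof (rule ls_exists[OF Hbd cd])
      fix y assume y: "y \<in> carrier_vec k" and "Hb *\<^sub>v y = 0\<^sub>v (k+1)"
      thus "y = 0\<^sub>v k" using backsub[OF hnz y] unfolding Hb_def by simp
    qed
    hence Pk: "P yk" by (rule yk_dim_if)
    have ykd: "yk \<in> carrier_vec k" using Pk P_def by simp
    have "A *\<^sub>v fab_x A b x0 z k \<noteq> b"
    proof
      assume "A *\<^sub>v fab_x A b x0 z k = b"
      hence s: "\<And>p. p < m \<Longrightarrow> (\<Sum>i<k+1. (c - Hb *\<^sub>v yk) $ i * vv A b x0 z i $ p) = 0"
        unfolding x_eq key[OF ykd] by blast
      have on: "orthonormal (fab_basis A b x0 z (k+1))"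
        by (rule basis_orth[OF beta]) (use k1 hnz in auto)
      have d0: "\<And>l. l < k + 1 \<Longrightarrow> (c - Hb *\<^sub>v yk) $ l = 0"
        using coeff_zero[OF on s] by blast
      have Hyd: "dim_vec (Hb *\<^sub>v yk) = k + 1" using Hbd by simp
      have rows: "\<And>i. 1 \<le> i \<Longrightarrow> i \<le> k \<Longrightarrow> (fab_Hbar A b x0 z k *\<^sub>v yk) $ i = 0"
      proof -
        fix i assume "1 \<le> i" "i \<le> k"
        hence "(c - Hb *\<^sub>v yk) $ i = 0" "c $ i = 0" using d0 ci by auto
        thus "(fab_Hbar A b x0 z k *\<^sub>v yk) $ i = 0" using Hyd \<open>i \<le> k\<close> unfolding Hb_def by simp
      qed
      have "yk = 0\<^sub>v k" by (rule backsub[OF hnz ykd rows])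
      have rc: "row Hb 0 \<in> carrier_vec k" by (rule row_carrier_vec[OF _ Hbd]) simp
      have "(Hb *\<^sub>v yk) $ 0 = row Hb 0 \<bullet> yk" using Hbd by (intro index_mult_mat_vec) simp
      hence "(Hb *\<^sub>v yk) $ 0 = 0" unfolding \<open>yk = 0\<^sub>v k\<close> using scalar_prod_right_zero[OF rc] by simp
      hence "(c - Hb *\<^sub>v yk) $ 0 = \<beta>" using c0 Hyd by simp
      thus False using d0[of 0] beta \<beta>_def by simp
    qed
    thus ?thesis using False by simp
  qed
qed


end
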